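(* Let $F:\mathbb{R}^n\times\mathbb{R}^m\to\mathbb{R}^n$ be differentiable with $L_{\nabla F}$-Lipschitz gradient (with respect to the joint variable $(\mathbf{x},\mathbf{u})$), and suppose $\|F(\mathbf{x},\mathbf{u})-F(\mathbf{x}',\mathbf{u})\|\le L_F\|\mathbf{x}-\mathbf{x}'\|$ for all $\mathbf{x},\mathbf{x}',\mathbf{u}$, with $L_F\neq 1$. Fix $H\in\mathbb{N}$, an initial state $\mathbf{x}_0$, an action set $U\subseteq\mathbb{R}^m$, and a nominal sequence $(\bar{\mathbf{x}}_k,\bar{\mathbf{u}}_{k+1})_{k=0}^{H-1}$. Let $L_k$ be the linearization of $F$ about $(\bar{\mathbf{x}}_k,\bar{\mathbf{u}}_{k+1})$: $$L_k(\mathbf{x},\mathbf{u})=F(\bar{\mathbf{x}}_k,\bar{\mathbf{u}}_{k+1})+\nabla_{\mathbf{x}}F(\bar{\mathbf{x}}_k,\bar{\mathbf{u}}_{k+1})(\mathbf{x}-\bar{\mathbf{x}}_k)+\nabla_{\mathbf{u}}F(\bar{\mathbf{x}}_k,\bar{\mathbf{u}}_{k+1})(\mathbf{u}-\bar{\mathbf{u}}_{k+1}).$$ For an input sequence $\mathbf{u}_{[H]}=(\mathbf{u}_1,\dots,\mathbf{u}_H)\in U^H$, define the nonlinear rollout $\xi_0=\mathbf{x}_0$, $\xi_{k+1}=F(\xi_k,\mathbf{u}_{k+1})$ and the linearized rollout $\eta_0=\mathbf{x}_0$, $\eta_{k+1}=L_k(\eta_k,\mathbf{u}_{k+1})$,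 and set $F^H(\mathbf{x}_0,\mathbf{u}_{[H]})=\xi_H$, $L^H(\mathbf{x}_0,\mathbf{u}_{[H]})=\eta_H$. Let $$\varepsilon_H=\sup_{\mathbf{u}_{[H]}\in U^H}\ \max_{0\le k\le H-1}\big\|(\eta_k,\mathbf{u}_{k+1})-(\bar{\mathbf{x}}_k,\bar{\mathbf{u}}_{k+1})\big\|$$ and assume $\varepsilon_H<\infty$. Then $$d_S\big(\{F^H(\mathbf{x}_0,\mathbf{u}_{[H]}):\mathbf{u}_{[H]}\in U^H\},\ \{L^H(\mathbf{x}_0,\mathbf{u}_{[H]}):\mathbf{u}_{[H]}\in U^H\}\big)\le\frac{L_F^H-1}{L_F-1}\cdot\frac12 L_{\nabla F}\,\varepsilon_H^2 .$$
   Context: For $a\in\mathbb{R}^n$ and $M\subseteq\mathbb{R}^n$, $d(a,M)=\inf_{m\in M}\|a-m\|$; the Hausdorff distance between $M,N\subseteq\mathbb{R}^n$ is $d_S(M,N)=\max\{\sup_{m\in M}d(m,N),\ \sup_{n\in N}d(n,M)\}$. Norms are Euclidean. *)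

theory Defs
  imports "HOL-Analysis.Analysis"
begin

definition hausdorff_dist :: "'a::metric_space set \<Rightarrow> 'a set \<Rightarrow> ereal" where
  "hausdorff_dist M N =
     max (SUP m\<in>M. ereal (infdist m N)) (SUP n\<in>N. ereal (infdist n M))"

primrec nl_rollout ::
  "('a \<Rightarrow> 'b \<Rightarrow> 'a) \<Rightarrow> 'a \<Rightarrow> (nat \<Rightarrow> 'b) \<Rightarrow> nat \<Rightarrow> 'a" where
  "nl_rollout F x0 u 0 = x0"
| "nl_rollout F x0 u (Suc k) = F (nl_rollout F x0 u k) (u (Suc k))"

text \<open>Linearization L_k of F about (xb k, ub (k+1)); F' p is the (joint) derivative
  of F at p, so F' p (v,0) is the x-partial and F' p (0,w) the u-partial.\<close>
definition linearization ::
  "('a::real_normed_vector \<Rightarrow> 'b::real_normed_vector \<Rightarrow> 'a) \<Rightarrow> ('a \<times> 'b \<Rightarrow> 'a \<times> 'b \<Rightarrow> 'a)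
   \<Rightarrow> (nat \<Rightarrow> 'a) \<Rightarrow> (nat \<Rightarrow> 'b) \<Rightarrow> nat \<Rightarrow> 'a \<Rightarrow> 'b \<Rightarrow> 'a" where
  "linearization F F' xb ub k x u =
     F (xb k) (ub (Suc k))
     + F' (xb k, ub (Suc k)) (x - xb k, 0)
     + F' (xb k, ub (Suc k)) (0, u - ub (Suc k))"

primrec lin_rollout ::
  "('a::real_normed_vector \<Rightarrow> 'b::real_normed_vector \<Rightarrow> 'a) \<Rightarrow> ('a \<times> 'b \<Rightarrow> 'a \<times> 'b \<Rightarrow> 'a)
   \<Rightarrow> (nat \<Rightarrow> 'a) \<Rightarrow> (nat \<Rightarrow> 'b) \<Rightarrow> 'a \<Rightarrow> (nat \<Rightarrow> 'b) \<Rightarrow> nat \<Rightarrow> 'a" where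
  "lin_rollout F F' xb ub x0 u 0 = x0"
| "lin_rollout F F' xb ub x0 u (Suc k) =
     linearization F F' xb ub k (lin_rollout F F' xb ub x0 u k) (u (Suc k))"

definition input_seqs :: "'b set \<Rightarrow> nat \<Rightarrow> (nat \<Rightarrow> 'b) set" where
  "input_seqs U H = {u. \<forall>k\<in>{1..H}. u k \<in> U}"

definition lin_dev ::
  "('a::real_normed_vector \<Rightarrow> 'b::real_normed_vector \<Rightarrow> 'a) \<Rightarrow> ('a \<times> 'b \<Rightarrow> 'a \<times> 'b \<Rightarrow> 'a)
   \<Rightarrow> (nat \<Rightarrow> 'a) \<Rightarrow> (nat \<Rightarrow> 'b) \<Rightarrow> 'a \<Rightarrow> nat \<Rightarrow> (nat \<Rightarrow> 'b) \<Rightarrow> real" where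
  "lin_dev F F' xb ub x0 H u =
     Max ((\<lambda>k. norm ((lin_rollout F F' xb ub x0 u k, u (Suc k)) - (xb k, ub (Suc k)))) ` {..<H})"

definition eps_H ::
  "('a::real_normed_vector \<Rightarrow> 'b::real_normed_vector \<Rightarrow> 'a) \<Rightarrow> ('a \<times> 'b \<Rightarrow> 'a \<times> 'b \<Rightarrow> 'a)
   \<Rightarrow> (nat \<Rightarrow> 'a) \<Rightarrow> (nat \<Rightarrow> 'b) \<Rightarrow> 'a \<Rightarrow> 'b set \<Rightarrow> nat \<Rightarrow> real" where
  "eps_H F F' xb ub x0 U H = Sup (lin_dev F F' xb ub x0 H ` input_seqs U H)"

end

theory Submission
  imports Defs
begin

lemma taylor_bound:
  fixes f :: "'a::real_normed_vector \<Rightarrow> 'b::real_normed_vector"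
  assumes d: "\<And>p. (f has_derivative f' p) (at p)"
    and lip: "\<And>p q. onorm (\<lambda>v. f' p v - f' q v) \<le> L * dist p q"
  shows "norm (f y - f x - f' x (y - x)) \<le> L / 2 * (norm (y - x))\<^sup>2"
proof -
  define h where "h = y - x"
  define G where "G t = f (x + t *\<^sub>R h) - t *\<^sub>R f' x h" for t :: real
  have bl: "bounded_linear (f' p)" for p using d by blast
  have GD: "(G has_vector_derivative (f' (x + t *\<^sub>R h) h - f' x h)) (at t)" for t
  proof -
    have g: "((\<lambda>t. x + t *\<^sub>R h) has_derivative (\<lambda>s. s *\<^sub>R h)) (at t)"
      by (auto intro!: derivative_eq_intros)
    have c: "((\<lambda>t. f (x + t *\<^sub>R h)) has_derivative (\<lambda>s. f' (x + t *\<^sub>R h) (s *\<^sub>R h))) (at t)"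
      using has_derivative_compose[OF g d] by simp
    have l: "((\<lambda>t. t *\<^sub>R f' x h) has_derivative (\<lambda>s. s *\<^sub>R f' x h)) (at t)"
      by (auto intro!: derivative_eq_intros)
    have "(G has_derivative (\<lambda>s. f' (x + t *\<^sub>R h) (s *\<^sub>R h) - s *\<^sub>R f' x h)) (at t)"
      unfolding G_def using has_derivative_diff[OF c l] by simp
    moreover have "(\<lambda>s. f' (x + t *\<^sub>R h) (s *\<^sub>R h) - s *\<^sub>R f' x h) = (\<lambda>s. s *\<^sub>R (f' (x + t *\<^sub>R h) h - f' x h))"
      using linear_scale[OF bounded_linear.linear[OF bl]] by (auto simp: algebra_simps)
    ultimately show ?thesis unfolding has_vector_derivative_def by simp
  qed
  have PD: "((\<lambda>t. L * (norm h)\<^sup>2 / 2 * t\<^sup>2) has_vector_derivative (L * (norm h)\<^sup>2 * t)) (at t)" for t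
    unfolding has_real_derivative_iff_has_vector_derivative[symmetric]
    by (auto intro!: derivative_eq_intros)
  have bnd: "norm (f' (x + t *\<^sub>R h) h - f' x h) \<le> L * (norm h)\<^sup>2 * t" if "0 < t" for t
  proof -
    have "bounded_linear (\<lambda>v. f' (x + t *\<^sub>R h) v - f' x v)"
      using bl bounded_linear_sub by blast
    then have "norm (f' (x + t *\<^sub>R h) h - f' x h) \<le> onorm (\<lambda>v. f' (x + t *\<^sub>R h) v - f' x v) * norm h"
      by (rule onorm)
    also have "\<dots> \<le> L * dist (x + t *\<^sub>R h) x * norm h"
      by (rule mult_right_mono[OF lip]) simp
    also have "\<dots> = L * (norm h)\<^sup>2 * t" using that by (simp add: dist_norm power2_eq_square)
    finally show ?thesis .
  qed
  have cG: "continuous_on {0..1} G"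
    using GD by (meson continuous_at_imp_continuous_on has_vector_derivative_continuous)
  have cP: "continuous_on {0..1} (\<lambda>t. L * (norm h)\<^sup>2 / 2 * t\<^sup>2)"
    by (intro continuous_intros)
  have "norm (G 1 - G 0) \<le> L * (norm h)\<^sup>2 / 2 * 1\<^sup>2 - L * (norm h)\<^sup>2 / 2 * 0\<^sup>2"
    by (rule differentiable_bound_general[OF zero_less_one cG cP GD PD bnd]) auto
  moreover have "G 1 - G 0 = f y - f x - f' x (y - x)" by (simp add: G_def h_def)
  ultimately show ?thesis by (simp add: h_def)
qed
theorem lemma2:
  fixes F :: "real^'n \<Rightarrow> real^'m \<Rightarrow> real^'n"
    and F' :: "(real^'n) \<times> (real^'m) \<Rightarrow> (real^'n) \<times> (real^'m) \<Rightarrow> real^'n"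
    and LdF LF :: real and H :: nat and x0 :: "real^'n" and U :: "(real^'m) set"
    and xb :: "nat \<Rightarrow> real^'n" and ub :: "nat \<Rightarrow> real^'m"
  assumes deriv: "\<And>p. ((\<lambda>q. F (fst q) (snd q)) has_derivative F' p) (at p)"
    and grad_lip: "\<And>p q. onorm (\<lambda>v. F' p v - F' q v) \<le> LdF * dist p q"
    and F_lip: "\<And>x x' u. norm (F x u - F x' u) \<le> LF * norm (x - x')"
    and LF_ne1: "LF \<noteq> 1"
    and eps_fin: "bdd_above (lin_dev F F' xb ub x0 H ` input_seqs U H)"
  shows "hausdorff_dist
           ((\<lambda>u. nl_rollout F x0 u H) ` input_seqs U H)
           ((\<lambda>u. lin_rollout F F' xb ub x0 u H) ` input_seqs U H)
         \<le> ereal ((LF ^ H - 1) / (LF - 1) * (1 / 2 * LdF * (eps_H F F' xb ub x0 U H)\<^sup>2))"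
  proof -
  define Fq where "Fq q = F (fst q) (snd q)" for q
  define eps where "eps = eps_H F F' xb ub x0 U H"
  define c where "c = LdF / 2 * eps\<^sup>2"
  have one_ne: "(1::real^'n) \<noteq> 0" by (metis one_index zero_index zero_neq_one)
  have bl: "bounded_linear (F' p)" for p using deriv by blast
  have LdF0: "LdF \<ge> 0"
  proof (rule ccontr)
    assume "\<not> ?thesis"
    let ?p = "((1::real^'n), (0::real^'m))" and ?q = "((0::real^'n), (0::real^'m))"
    have "dist ?p ?q > 0" using one_ne by simp
    moreover have "0 \<le> onorm (\<lambda>v. F' ?p v - F' ?q v)"
      by (rule onorm_pos_le) (use bl bounded_linear_sub in blast)
    moreover have "LdF * dist ?p ?q < 0"
      using calculation(1) \<open>\<not> LdF \<ge> 0\<close> by (simp add: mult_neg_pos)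
    ultimately show False using grad_lip[of ?p ?q] by linarith
  qed
  have LF0: "LF \<ge> 0"
  proof (rule ccontr)
    assume "\<not> ?thesis"
    have "norm (1::real^'n) > 0" using one_ne by simp
    then have "LF * norm ((1::real^'n) - 0) < 0"
      using \<open>\<not> LF \<ge> 0\<close> by (simp add: mult_neg_pos)
    then show False using F_lip[of 1 0 0] norm_ge_zero[of "F 1 0 - F 0 0"] by linarith
  qed
  have key: "norm (nl_rollout F x0 u H - lin_rollout F F' xb ub x0 u H)
     \<le> (LF ^ H - 1) / (LF - 1) * (1 / 2 * LdF * eps\<^sup>2)" if u: "u \<in> input_seqs U H" for u
  proof -
    define e where "e k = norm (nl_rollout F x0 u k - lin_rollout F F' xb ub x0 u k)" for k
    have step: "e (Suc k) \<le> LF * e k + c" if k: "k < H" for k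
    proof -
      let ?eta = "lin_rollout F F' xb ub x0 u k" and ?xi = "nl_rollout F x0 u k"
      let ?p = "(?eta, u (Suc k))" and ?pb = "(xb k, ub (Suc k))"
      have lin: "F' ?pb (?eta - xb k, 0) + F' ?pb (0, u (Suc k) - ub (Suc k)) = F' ?pb (?p - ?pb)"
        using linear_add[OF bounded_linear.linear[OF bl], of ?pb "(?eta - xb k, 0)" "(0, u (Suc k) - ub (Suc k))"]
        by simp
      have T: "norm (Fq ?p - Fq ?pb - F' ?pb (?p - ?pb)) \<le> LdF / 2 * (norm (?p - ?pb))\<^sup>2"
        by (rule taylor_bound[of Fq F' LdF]) (use deriv grad_lip in \<open>simp_all add: Fq_def[abs_def]\<close>)
      have dev: "norm (?p - ?pb) \<le> lin_dev F F' xb ub x0 H u"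
        unfolding lin_dev_def by (rule Max_ge) (use k in auto)
      have "lin_dev F F' xb ub x0 H u \<le> eps"
        unfolding eps_def eps_H_def by (rule cSup_upper) (use u eps_fin in auto)
      with dev have "(norm (?p - ?pb))\<^sup>2 \<le> eps\<^sup>2"
        by (intro power_mono) auto
      with T LdF0 have T2: "norm (Fq ?p - Fq ?pb - F' ?pb (?p - ?pb)) \<le> c"
        unfolding c_def by (smt (verit) mult_left_mono divide_nonneg_nonneg)
      have eq: "nl_rollout F x0 u (Suc k) - lin_rollout F F' xb ub x0 u (Suc k)
         = (F ?xi (u (Suc k)) - F ?eta (u (Suc k))) + (Fq ?p - Fq ?pb - F' ?pb (?p - ?pb))"
        using lin by (simp add: linearization_def Fq_def algebra_simps)
      have "e (Suc k) \<le> norm (F ?xi (u (Suc k)) - F ?eta (u (Suc k))) + norm (Fq ?p - Fq ?pb - F' ?pb (?p - ?pb))"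
        unfolding e_def eq by (rule norm_triangle_ineq)
      also have "\<dots> \<le> LF * e k + c" using F_lip T2 unfolding e_def by (smt (verit))
      finally show ?thesis .
    qed
    have "k \<le> H \<Longrightarrow> e k \<le> c * (\<Sum>i<k. LF ^ i)" for k
    proof (induction k)
      case 0 then show ?case by (simp add: e_def)
    next
      case (Suc k)
      then have "e (Suc k) \<le> LF * e k + c" using step by simp
      also have "\<dots> \<le> LF * (c * (\<Sum>i<k. LF ^ i)) + c"
        using Suc LF0 by (simp add: mult_left_mono)
      also have "\<dots> = c * (\<Sum>i<Suc k. LF ^ i)"
        by (simp only: sum.lessThan_Suc_shift) (simp add: sum_distrib_left algebra_simps)
      finally show ?case .
    qed
    then have "e H \<le> c * (\<Sum>i<H. LF ^ i)" by simp
    also have "(\<Sum>i<H. LF ^ i) = (LF ^ H - 1) / (LF - 1)"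
      using LF_ne1 by (simp add: sum_gp_strict) (simp add: field_simps)
    finally show ?thesis unfolding e_def c_def by (simp add: algebra_simps)
  qed
  define B where "B = (LF ^ H - 1) / (LF - 1) * (1 / 2 * LdF * eps\<^sup>2)"
  have A: "(SUP m\<in>(\<lambda>u. nl_rollout F x0 u H) ` input_seqs U H.
        ereal (infdist m ((\<lambda>u. lin_rollout F F' xb ub x0 u H) ` input_seqs U H))) \<le> ereal B"
  proof (rule SUP_least, clarify)
    fix u assume u: "u \<in> input_seqs U H"
    have "infdist (nl_rollout F x0 u H) ((\<lambda>u. lin_rollout F F' xb ub x0 u H) ` input_seqs U H)
        \<le> dist (nl_rollout F x0 u H) (lin_rollout F F' xb ub x0 u H)"
      by (rule infdist_le) (use u in auto)
    with key[OF u] show "ereal (infdist (nl_rollout F x0 u H) ((\<lambda>u. lin_rollout F F' xb ub x0 u H) ` input_seqs U H)) \<le> ereal B"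
      by (simp add: B_def dist_norm)
  qed
  have C: "(SUP m\<in>(\<lambda>u. lin_rollout F F' xb ub x0 u H) ` input_seqs U H.
        ereal (infdist m ((\<lambda>u. nl_rollout F x0 u H) ` input_seqs U H))) \<le> ereal B"
  proof (rule SUP_least, clarify)
    fix u assume u: "u \<in> input_seqs U H"
    have "infdist (lin_rollout F F' xb ub x0 u H) ((\<lambda>u. nl_rollout F x0 u H) ` input_seqs U H)
        \<le> dist (lin_rollout F F' xb ub x0 u H) (nl_rollout F x0 u H)"
      by (rule infdist_le) (use u in auto)
    with key[OF u] show "ereal (infdist (lin_rollout F F' xb ub x0 u H) ((\<lambda>u. nl_rollout F x0 u H) ` input_seqs U H)) \<le> ereal B"
      by (simp add: B_def dist_norm norm_minus_commute)
  qed
  show ?thesis unfolding hausdorff_dist_def using A C by (simp add: B_def eps_def)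
qed

end
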